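(* Let $a,b,c\ge 0$ be real parameters and consider the polynomial system on $\mathbb{C}^3$ $$\dot x=x(1-y+cx-axz),\qquad \dot y=y(-1+x),\qquad \dot z=z(-b+ax^2).$$ Then the unique irreducible Darboux polynomials of this system with non-zero cofactors are $x$, $y$ and $z$.
   Context: The vector field of the system is $\mathcal{X}=x(1-y+cx-axz)\partial_x+y(-1+x)\partial_y+z(-b+ax^2)\partial_z$. A Darboux polynomial is a polynomial $f\in\mathbb{C}[x,y,z]$ such that $\mathcal{X}f=Kf$ for some polynomial $K\in\mathbb{C}[x,y,z]$ (the cofactor) of degree at most two. *)

theory Defs
  imports Complex_Main "HOL-Computational_Algebra.Polynomial"
begin

text \<open>Polynomials in \<open>\<complex>[x,y,z]\<close> are represented as iterated univariate polynomials
  \<open>\<complex>[x][y][z]\<close>: the outermost variable is z, the middle one y, the innermost x.\<close>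

type_synonym cpoly3 = "complex poly poly poly"

definition Xv :: cpoly3 where "Xv = [:[:[:0, 1:]:]:]"
definition Yv :: cpoly3 where "Yv = [:[:0, 1:]:]"
definition Zv :: cpoly3 where "Zv = [:0, 1:]"

definition Cst :: "complex \<Rightarrow> cpoly3" where "Cst c = [:[:[:c:]:]:]"

definition dX :: "cpoly3 \<Rightarrow> cpoly3" where "dX p = map_poly (map_poly pderiv) p"
definition dY :: "cpoly3 \<Rightarrow> cpoly3" where "dY p = map_poly pderiv p"
definition dZ :: "cpoly3 \<Rightarrow> cpoly3" where "dZ p = pderiv p"

definition mcoeff :: "cpoly3 \<Rightarrow> nat \<Rightarrow> nat \<Rightarrow> nat \<Rightarrow> complex" where
  "mcoeff p i j k = coeff (coeff (coeff p k) j) i"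

definition total_degree_le :: "cpoly3 \<Rightarrow> nat \<Rightarrow> bool" where
  "total_degree_le p d \<longleftrightarrow> (\<forall>i j k. mcoeff p i j k \<noteq> 0 \<longrightarrow> i + j + k \<le> d)"

definition vf :: "real \<Rightarrow> real \<Rightarrow> real \<Rightarrow> cpoly3 \<Rightarrow> cpoly3" where
  "vf a b c f =
     Xv * (1 - Yv + Cst (complex_of_real c) * Xv - Cst (complex_of_real a) * Xv * Zv) * dX f
   + Yv * (-1 + Xv) * dY f
   + Zv * (- Cst (complex_of_real b) + Cst (complex_of_real a) * Xv ^ 2) * dZ f"

definition darboux :: "real \<Rightarrow> real \<Rightarrow> real \<Rightarrow> cpoly3 \<Rightarrow> cpoly3 \<Rightarrow> bool" where
  "darboux a b c f K \<longleftrightarrow> total_degree_le K 2 \<and> vf a b c f = K * f"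

end

theory Submission
  imports Defs
begin

definition cf :: "cpoly3 \<Rightarrow> int \<Rightarrow> int \<Rightarrow> int \<Rightarrow> complex" where
  "cf p i j k = (if 0 \<le> i \<and> 0 \<le> j \<and> 0 \<le> k then mcoeff p (nat i) (nat j) (nat k) else 0)"

lemma cf_neg: "i < 0 \<or> j < 0 \<or> k < 0 \<Longrightarrow> cf p i j k = 0"
  by (auto simp: cf_def)

lemma cf_add [simp]: "cf (p + q) i j k = cf p i j k + cf q i j k"
  by (simp add: cf_def mcoeff_def)

lemma cf_diff [simp]: "cf (p - q) i j k = cf p i j k - cf q i j k"
  by (simp add: cf_def mcoeff_def)

lemma cf_uminus [simp]: "cf (- p) i j k = - cf p i j k"
  by (simp add: cf_def mcoeff_def)

lemma cf_zero [simp]: "cf 0 i j k = 0"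
  by (simp add: cf_def mcoeff_def)

lemma cf_Cst [simp]: "cf (Cst c * p) i j k = c * cf p i j k"
  by (simp add: cf_def mcoeff_def Cst_def)

lemma cf_X [simp]: "cf (Xv * p) i j k = cf p (i - 1) j k"
  by (auto simp: cf_def mcoeff_def Xv_def coeff_pCons nat_diff_distrib split: nat.split)

lemma cf_Y [simp]: "cf (Yv * p) i j k = cf p i (j - 1) k"
  by (auto simp: cf_def mcoeff_def Yv_def coeff_pCons nat_diff_distrib split: nat.split)

lemma cf_Z [simp]: "cf (Zv * p) i j k = cf p i j (k - 1)"
  by (auto simp: cf_def mcoeff_def Zv_def coeff_pCons nat_diff_distrib split: nat.split)

lemma coeff_const1: "coeff [:c:] n = (if n = 0 then c else 0)"
  by (cases n) auto

lemma cf_one: "cf 1 i j k = (if i = 0 \<and> j = 0 \<and> k = 0 then 1 else 0)"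
  by (auto simp: cf_def mcoeff_def one_pCons coeff_const1)

lemma mc_dX: "mcoeff (dX p) i j k = of_nat (Suc i) * mcoeff p (Suc i) j k"
  by (simp add: mcoeff_def dX_def coeff_map_poly coeff_pderiv del: of_nat_Suc)

lemma mc_dY: "mcoeff (dY p) i j k = of_nat (Suc j) * mcoeff p i (Suc j) k"
  by (simp add: mcoeff_def dY_def coeff_map_poly coeff_pderiv of_nat_mult_conv_smult del: of_nat_Suc)

lemma mc_dZ: "mcoeff (dZ p) i j k = of_nat (Suc k) * mcoeff p i j (Suc k)"
  by (simp add: mcoeff_def dZ_def coeff_pderiv of_nat_mult_conv_smult del: of_nat_Suc)

lemma cf_dX [simp]: "cf (dX p) i j k = of_int (i + 1) * cf p (i + 1) j k"
proof (cases "i = -1")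
  case False
  then show ?thesis
    by (auto simp: cf_def mc_dX Suc_nat_eq_nat_zadd1 add.commute)
qed (simp add: cf_def)

lemma cf_dY [simp]: "cf (dY p) i j k = of_int (j + 1) * cf p i (j + 1) k"
proof (cases "j = -1")
  case False
  then show ?thesis
    by (auto simp: cf_def mc_dY Suc_nat_eq_nat_zadd1 add.commute)
qed (simp add: cf_def)

lemma cf_dZ [simp]: "cf (dZ p) i j k = of_int (k + 1) * cf p i j (k + 1)"
proof (cases "k = -1")
  case False
  then show ?thesis
    by (auto simp: cf_def mc_dZ Suc_nat_eq_nat_zadd1 add.commute)
qed (simp add: cf_def)

lemma cf_ext: assumes "\<And>i j k. cf p i j k = cf q i j k" shows "p = q"
proof -
  have "\<And>i j k. mcoeff p i j k = mcoeff q i j k"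
    using assms[of "int _" "int _" "int _"] by (simp add: cf_def)
  then show ?thesis by (simp add: mcoeff_def poly_eq_iff)
qed

lemma vf_normal:
  "vf a b c f = Xv * dX f - Xv * (Yv * dX f) + Cst (complex_of_real c) * (Xv * (Xv * dX f))
     - Cst (complex_of_real a) * (Xv * (Xv * (Zv * dX f))) + Yv * (Xv * dY f) - Yv * dY f
     - Cst (complex_of_real b) * (Zv * dZ f) + Cst (complex_of_real a) * (Xv * (Xv * (Zv * dZ f)))"
  unfolding vf_def by (simp add: algebra_simps power2_eq_square)

lemma cf_vf:
  "cf (vf a b c f) i j k =
     (of_int i - of_int j - complex_of_real b * of_int k) * cf f i j k
   + (complex_of_real c * (of_int i - 1) + of_int j) * cf f (i - 1) j k
   - of_int i * cf f i (j - 1) k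
   - complex_of_real a * (of_int i - 1) * cf f (i - 1) j (k - 1)
   + complex_of_real a * of_int k * cf f (i - 2) j k"
  unfolding vf_normal
  by (simp only: cf_add cf_diff cf_Cst cf_X cf_Y cf_Z cf_dX cf_dY cf_dZ) (simp add: algebra_simps)

lemma cf_Xv: "cf Xv i j k = cf 1 (i - 1) j k"
  using cf_X[of 1] by simp
lemma cf_Yv: "cf Yv i j k = cf 1 i (j - 1) k"
  using cf_Y[of 1] by simp
lemma cf_Zv: "cf Zv i j k = cf 1 i j (k - 1)"
  using cf_Z[of 1] by simp
lemma cf_Cst1: "cf (Cst c) i j k = c * cf 1 i j k"
  using cf_Cst[of c 1] by simp

definition Kexp :: "cpoly3 \<Rightarrow> cpoly3" where
  "Kexp K = Cst (cf K 0 0 0) + Cst (cf K 1 0 0) * Xv + Cst (cf K 0 1 0) * Yv + Cst (cf K 0 0 1) * Zv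
     + Cst (cf K 2 0 0) * (Xv * Xv) + Cst (cf K 0 2 0) * (Yv * Yv) + Cst (cf K 0 0 2) * (Zv * Zv)
     + Cst (cf K 1 1 0) * (Xv * Yv) + Cst (cf K 1 0 1) * (Xv * Zv) + Cst (cf K 0 1 1) * (Yv * Zv)"

lemma tdl_cf: "total_degree_le K d \<Longrightarrow> cf K i j k \<noteq> 0 \<Longrightarrow> 0 \<le> i \<and> 0 \<le> j \<and> 0 \<le> k \<and> i + j + k \<le> int d"
proof -
  assume t: "total_degree_le K d" and nz: "cf K i j k \<noteq> 0"
  then have nn: "0 \<le> i" "0 \<le> j" "0 \<le> k" and m: "mcoeff K (nat i) (nat j) (nat k) \<noteq> 0"
    unfolding cf_def by (auto split: if_splits)
  from t m have "nat i + nat j + nat k \<le> d" unfolding total_degree_le_def by blast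
  with nn show ?thesis by linarith
qed

lemma ten_cases:
  fixes i j k :: int
  assumes "0 \<le> i" "0 \<le> j" "0 \<le> k" "i + j + k \<le> 2"
  shows "(i,j,k) \<in> {(0,0,0),(1,0,0),(0,1,0),(0,0,1),(2,0,0),(0,2,0),(0,0,2),(1,1,0),(1,0,1),(0,1,1)}"
proof -
  have i: "i = 0 \<or> i = 1 \<or> i = 2" and j: "j = 0 \<or> j = 1 \<or> j = 2"
    and k: "k = 0 \<or> k = 1 \<or> k = 2" using assms by linarith+
  show ?thesis using i j k assms(4) by (elim disjE) simp_all
qed

lemma cfm0: "cf (Cst c) i j k = (if i = 0 \<and> j = 0 \<and> k = 0 then c else 0)"
  by (simp add: cf_Cst1 cf_one)
lemma cfm1: "cf (Cst c * Xv) i j k = (if i = 1 \<and> j = 0 \<and> k = 0 then c else 0)"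
  by (simp add: cf_Xv cf_one)
lemma cfm2: "cf (Cst c * Yv) i j k = (if i = 0 \<and> j = 1 \<and> k = 0 then c else 0)"
  by (simp add: cf_Yv cf_one)
lemma cfm3: "cf (Cst c * Zv) i j k = (if i = 0 \<and> j = 0 \<and> k = 1 then c else 0)"
  by (simp add: cf_Zv cf_one)
lemma cfm4: "cf (Cst c * (Xv * Xv)) i j k = (if i = 2 \<and> j = 0 \<and> k = 0 then c else 0)"
  by (simp add: cf_Xv cf_one diff_diff_eq)
lemma cfm5: "cf (Cst c * (Yv * Yv)) i j k = (if i = 0 \<and> j = 2 \<and> k = 0 then c else 0)"
  by (simp add: cf_Yv cf_one diff_diff_eq)
lemma cfm6: "cf (Cst c * (Zv * Zv)) i j k = (if i = 0 \<and> j = 0 \<and> k = 2 then c else 0)"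
  by (simp add: cf_Zv cf_one diff_diff_eq)
lemma cfm7: "cf (Cst c * (Xv * Yv)) i j k = (if i = 1 \<and> j = 1 \<and> k = 0 then c else 0)"
  by (simp add: cf_Yv cf_one)
lemma cfm8: "cf (Cst c * (Xv * Zv)) i j k = (if i = 1 \<and> j = 0 \<and> k = 1 then c else 0)"
  by (simp add: cf_Zv cf_one)
lemma cfm9: "cf (Cst c * (Yv * Zv)) i j k = (if i = 0 \<and> j = 1 \<and> k = 1 then c else 0)"
  by (simp add: cf_Zv cf_one)

lemma cf_Kexp: "cf (Kexp K) i j k =
    (if i = 0 \<and> j = 0 \<and> k = 0 then cf K 0 0 0 else 0)
  + (if i = 1 \<and> j = 0 \<and> k = 0 then cf K 1 0 0 else 0)
  + (if i = 0 \<and> j = 1 \<and> k = 0 then cf K 0 1 0 else 0)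
  + (if i = 0 \<and> j = 0 \<and> k = 1 then cf K 0 0 1 else 0)
  + (if i = 2 \<and> j = 0 \<and> k = 0 then cf K 2 0 0 else 0)
  + (if i = 0 \<and> j = 2 \<and> k = 0 then cf K 0 2 0 else 0)
  + (if i = 0 \<and> j = 0 \<and> k = 2 then cf K 0 0 2 else 0)
  + (if i = 1 \<and> j = 1 \<and> k = 0 then cf K 1 1 0 else 0)
  + (if i = 1 \<and> j = 0 \<and> k = 1 then cf K 1 0 1 else 0)
  + (if i = 0 \<and> j = 1 \<and> k = 1 then cf K 0 1 1 else 0)"
  unfolding Kexp_def
  by (simp only: cf_add cfm0 cfm1 cfm2 cfm3 cfm4 cfm5 cfm6 cfm7 cfm8 cfm9)

lemma Kexp_eq: assumes "total_degree_le K 2" shows "K = Kexp K"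
proof (rule cf_ext)
  fix i j k
  show "cf K i j k = cf (Kexp K) i j k"
  proof (cases "0 \<le> i \<and> 0 \<le> j \<and> 0 \<le> k \<and> i + j + k \<le> 2")
    case True
    then have "(i,j,k) \<in> {(0,0,0),(1,0,0),(0,1,0),(0,0,1),(2,0,0),(0,2,0),(0,0,2),(1,1,0),(1,0,1),(0,1,1)}"
      using True by (intro ten_cases) auto
    then show ?thesis
      unfolding cf_Kexp by (elim insertE emptyE) simp_all
  next
    case False
    then have z: "cf K i j k = 0" using tdl_cf[OF assms, of i j k] by auto
    have n: "(i,j,k) \<notin> {(0,0,0),(1,0,0),(0,1,0),(0,0,1),(2,0,0),(0,2,0),(0,0,2),(1,1,0),(1,0,1),(0,1,1)}"
    proof
      assume "(i,j,k) \<in> {(0,0,0),(1,0,0),(0,1,0),(0,0,1),(2,0,0),(0,2,0),(0,0,2),(1,1,0),(1,0,1),(0,1,1)}"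
      then have "0 \<le> i \<and> 0 \<le> j \<and> 0 \<le> k \<and> i + j + k \<le> 2"
        by (elim insertE emptyE) simp_all
      with False show False by blast
    qed
    have "cf (Kexp K) i j k = 0"
    proof -
      have cs: "\<not> (i = 0 \<and> j = 0 \<and> k = 0)" "\<not> (i = 1 \<and> j = 0 \<and> k = 0)" "\<not> (i = 0 \<and> j = 1 \<and> k = 0)" "\<not> (i = 0 \<and> j = 0 \<and> k = 1)" "\<not> (i = 2 \<and> j = 0 \<and> k = 0)" "\<not> (i = 0 \<and> j = 2 \<and> k = 0)" "\<not> (i = 0 \<and> j = 0 \<and> k = 2)" "\<not> (i = 1 \<and> j = 1 \<and> k = 0)" "\<not> (i = 1 \<and> j = 0 \<and> k = 1)" "\<not> (i = 0 \<and> j = 1 \<and> k = 1)"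
        using n by simp_all
      show ?thesis unfolding cf_Kexp if_not_P[OF cs(1)] if_not_P[OF cs(2)] if_not_P[OF cs(3)] if_not_P[OF cs(4)] if_not_P[OF cs(5)] if_not_P[OF cs(6)] if_not_P[OF cs(7)] if_not_P[OF cs(8)] if_not_P[OF cs(9)] if_not_P[OF cs(10)] by simp
    qed
    then show ?thesis using z by simp
  qed
qed

lemma cf_Kf: assumes "total_degree_le K 2"
  shows "cf (K * f) i j k =
    cf K 0 0 0 * cf f i j k + cf K 1 0 0 * cf f (i - 1) j k + cf K 0 1 0 * cf f i (j - 1) k
  + cf K 0 0 1 * cf f i j (k - 1) + cf K 2 0 0 * cf f (i - 2) j k + cf K 0 2 0 * cf f i (j - 2) k
  + cf K 0 0 2 * cf f i j (k - 2) + cf K 1 1 0 * cf f (i - 1) (j - 1) k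
  + cf K 1 0 1 * cf f (i - 1) j (k - 1) + cf K 0 1 1 * cf f i (j - 1) (k - 1)"
proof -
  have "K * f = Kexp K * f" using Kexp_eq[OF assms] by metis
  also have "\<dots> = Cst (cf K 0 0 0) * f + Cst (cf K 1 0 0) * (Xv * f) + Cst (cf K 0 1 0) * (Yv * f)
     + Cst (cf K 0 0 1) * (Zv * f)
     + Cst (cf K 2 0 0) * (Xv * (Xv * f)) + Cst (cf K 0 2 0) * (Yv * (Yv * f)) + Cst (cf K 0 0 2) * (Zv * (Zv * f))
     + Cst (cf K 1 1 0) * (Xv * (Yv * f)) + Cst (cf K 1 0 1) * (Xv * (Zv * f)) + Cst (cf K 0 1 1) * (Yv * (Zv * f))"
    unfolding Kexp_def by (simp add: algebra_simps)
  finally have "cf (K * f) i j k = cf (Cst (cf K 0 0 0) * f + Cst (cf K 1 0 0) * (Xv * f) + Cst (cf K 0 1 0) * (Yv * f)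
     + Cst (cf K 0 0 1) * (Zv * f)
     + Cst (cf K 2 0 0) * (Xv * (Xv * f)) + Cst (cf K 0 2 0) * (Yv * (Yv * f)) + Cst (cf K 0 0 2) * (Zv * (Zv * f))
     + Cst (cf K 1 1 0) * (Xv * (Yv * f)) + Cst (cf K 1 0 1) * (Xv * (Zv * f)) + Cst (cf K 0 1 1) * (Yv * (Zv * f))) i j k"
    by (rule arg_cong)
  then show ?thesis
    by (simp only: cf_add cf_Cst cf_X cf_Y cf_Z diff_diff_eq one_add_one)
qed

lemma ex_max_w:
  assumes "finite A" "A \<noteq> {}"
  shows "\<exists>p\<in>A. \<forall>q\<in>A. (w::'a \<Rightarrow> int) q \<le> w p"
proof -
  have "Max (w ` A) \<in> w ` A" using assms by simp
  then obtain p where "p \<in> A" "w p = Max (w ` A)" by auto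
  moreover have "\<forall>q\<in>A. w q \<le> Max (w ` A)" using assms by simp
  ultimately show ?thesis by metis
qed

lemma ex_min_w:
  assumes "finite A" "A \<noteq> {}"
  shows "\<exists>p\<in>A. \<forall>q\<in>A. (w::'a \<Rightarrow> int) p \<le> w q"
proof -
  have "Min (w ` A) \<in> w ` A" using assms by simp
  then obtain p where "p \<in> A" "w p = Min (w ` A)" by auto
  moreover have "\<forall>q\<in>A. Min (w ` A) \<le> w q" using assms by simp
  ultimately show ?thesis by metis
qed

lemma LV:
  fixes P :: "int \<Rightarrow> int \<Rightarrow> complex" and cc k0 k1 :: complex
  assumes fin: "finite {(i,j). P i j \<noteq> 0}"
    and nn: "\<And>i j. P i j \<noteq> 0 \<Longrightarrow> 0 \<le> i \<and> 0 \<le> j"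
    and eq: "\<And>i j. (of_int i - of_int j - k0) * P i j + (cc * (of_int i - 1) + of_int j - k1) * P (i - 1) j
                 - of_int i * P i (j - 1) = 0"
    and p: "P i j \<noteq> 0"
  shows "i = 0"
proof -
  define S where "S = {(i,j). P i j \<noteq> 0}"
  have finS: "finite S" using fin by (simp add: S_def)
  have r0: "of_int j = - k0" if "P 0 j \<noteq> 0" for j
  proof -
    have "P (-1) j = 0" using nn[of "-1" j] by force
    then have "(of_int 0 - of_int j - k0) * P 0 j = 0" using eq[of 0 j] by simp
    with that have "of_int 0 - of_int j - k0 = 0" by (simp only: mult_eq_0_iff) simp
    then show ?thesis by (simp add: algebra_simps) (metis minus_minus)
  qed
  have desc: "\<forall>i j. i = int n \<longrightarrow> P i j \<noteq> 0 \<longrightarrow> (\<exists>j'. P 0 j' \<noteq> 0 \<and> i + j \<le> j')" for n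
  proof (induction n)
    case 0
    then show ?case by auto
  next
    case (Suc n)
    show ?case
    proof (intro allI impI)
      fix i j assume i: "i = int (Suc n)" and pij: "P i j \<noteq> 0"
      define R where "R = {j'. P i j' \<noteq> 0}"
      have "R \<subseteq> snd ` S" unfolding R_def S_def by (auto simp: image_iff)
      then have finR: "finite R" using finS finite_surj by blast
      have jR: "j \<in> R" using pij by (simp add: R_def)
      obtain t where tR: "t \<in> R" and tmax: "\<forall>q\<in>R. q \<le> t"
        using ex_max_w[OF finR, of id] jR by auto
      have pt: "P i t \<noteq> 0" using tR by (simp add: R_def)
      have jt: "j \<le> t" using tmax jR by auto
      have pt1: "P i (t + 1) = 0" using tmax by (auto simp: R_def)
      have "(cc * (of_int i - 1) + of_int (t + 1) - k1) * P (i - 1) (t + 1) - of_int i * P i t = 0"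
        using eq[of i "t + 1"] pt1 by simp
      moreover have "of_int i * P i t \<noteq> 0"
      proof -
        have "i \<noteq> 0" using i by simp
        then have "(of_int i :: complex) \<noteq> 0" by (simp only: of_int_eq_0_iff) simp
        then show ?thesis using pt by simp
      qed
      ultimately have "P (i - 1) (t + 1) \<noteq> 0" by auto
      moreover have "i - 1 = int n" using i by simp
      ultimately obtain j' where "P 0 j' \<noteq> 0" "i - 1 + (t + 1) \<le> j'" using Suc.IH by blast
      then show "\<exists>j'. P 0 j' \<noteq> 0 \<and> i + j \<le> j'" using jt by (intro exI[of _ j']) auto
    qed
  qed
  have bound: "\<exists>j'. P 0 j' \<noteq> 0 \<and> i + j \<le> j'" if "P i j \<noteq> 0" for i j
  proof -
    have "0 \<le> i" using nn that by blast
    then have "i = int (nat i)" by simp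
    then show ?thesis using desc[of "nat i"] that by blast
  qed
  have Sne: "S \<noteq> {}" using p by (auto simp: S_def)
  obtain q where qS: "q \<in> S" and qmin: "\<forall>q'\<in>S. fst q + snd q \<le> fst q' + snd q'"
    using ex_min_w[OF finS Sne, of "\<lambda>q. fst q + snd q"] by auto
  obtain i0 j0 where q: "q = (i0, j0)" by (cases q)
  have p0: "P i0 j0 \<noteq> 0" using qS q by (simp add: S_def)
  have a1: "P (i0 - 1) j0 = 0"
  proof (rule ccontr)
    assume "P (i0 - 1) j0 \<noteq> 0"
    then have "(i0 - 1, j0) \<in> S" by (simp add: S_def)
    then show False using qmin q by force
  qed
  have a2: "P i0 (j0 - 1) = 0"
  proof (rule ccontr)
    assume "P i0 (j0 - 1) \<noteq> 0"
    then have "(i0, j0 - 1) \<in> S" by (simp add: S_def)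
    then show False using qmin q by force
  qed
  have "(of_int i0 - of_int j0 - k0) * P i0 j0 = 0" using eq[of i0 j0] a1 a2 by simp
  then have d0: "of_int i0 - of_int j0 - k0 = 0" using p0 by simp
  obtain beta where pb: "P 0 beta \<noteq> 0" and b0: "i0 + j0 \<le> beta" using bound[OF p0] by blast
  have kb: "k0 = - of_int beta" using r0[OF pb] by simp
  from d0 kb have "of_int (i0 - j0 + beta) = (0::complex)" by simp
  then have e0: "i0 - j0 + beta = 0" by (simp only: of_int_eq_0_iff)
  have nn0: "0 \<le> i0" using nn p0 by blast
  from e0 b0 nn0 have i00: "i0 = 0" and j0b: "j0 = beta" by linarith+
  have lo: "beta \<le> i' + j'" if "P i' j' \<noteq> 0" for i' j'
  proof -
    have "(i', j') \<in> S" using that by (simp add: S_def)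
    then show ?thesis using qmin q i00 j0b by force
  qed
  have hi: "i' + j' \<le> beta" if hP: "P i' j' \<noteq> 0" for i' j'
  proof -
    obtain b2 where pb2: "P 0 b2 \<noteq> 0" and le: "i' + j' \<le> b2" using bound[OF hP] by blast
    have "of_int b2 = (of_int beta :: complex)" using r0[OF pb2] r0[OF pb] by simp
    then have "b2 = beta" by (simp only: of_int_eq_iff)
    then show ?thesis using le by simp
  qed
  have s: "i + j = beta" using lo[OF p] hi[OF p] by simp
  have z1: "P (i - 1) j = 0"
  proof (rule ccontr)
    assume "P (i - 1) j \<noteq> 0"
    then have "beta \<le> i - 1 + j" by (rule lo)
    then show False using s by simp
  qed
  have z2: "P i (j - 1) = 0"
  proof (rule ccontr)
    assume "P i (j - 1) \<noteq> 0"
    then have "beta \<le> i + (j - 1)" by (rule lo)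
    then show False using s by simp
  qed
  have "(of_int i - of_int j - k0) * P i j = 0" using eq[of i j] z1 z2 by simp
  then have "of_int i - of_int j - k0 = 0" using p by simp
  with kb have "of_int (i - j + beta) = (0::complex)" by simp
  then have "i - j + beta = 0" by (simp only: of_int_eq_0_iff)
  with s show "i = 0" by linarith
qed

lemma mcoeff_bound:
  assumes "mcoeff p i j k \<noteq> 0"
  shows "k \<le> degree p \<and> j \<le> degree (coeff p k) \<and> i \<le> degree (coeff (coeff p k) j)"
  using assms unfolding mcoeff_def by (metis coeff_0 le_degree)

lemma finite_mcoeff: "finite {(i,j,k). mcoeff p i j k \<noteq> 0}"
proof (rule finite_subset)
  show "{(i,j,k). mcoeff p i j k \<noteq> 0} \<subseteq>
    (\<Union>k\<in>{..degree p}. \<Union>j\<in>{..degree (coeff p k)}. (\<lambda>i. (i,j,k)) ` {..degree (coeff (coeff p k) j)})"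
    using mcoeff_bound by fastforce
  show "finite (\<Union>k\<in>{..degree p}. \<Union>j\<in>{..degree (coeff p k)}. (\<lambda>i. (i,j,k)) ` {..degree (coeff (coeff p k) j)})"
    by auto
qed

lemma finite_cf: "finite {(i,j,k). cf p i j k \<noteq> 0}"
proof (rule finite_subset)
  show "{(i,j,k). cf p i j k \<noteq> 0} \<subseteq> (\<lambda>(i,j,k). (int i, int j, int k)) ` {(i,j,k). mcoeff p i j k \<noteq> 0}"
  proof
    fix x assume "x \<in> {(i,j,k). cf p i j k \<noteq> 0}"
    then obtain i j k where x: "x = (i,j,k)" and nz: "cf p i j k \<noteq> 0" by auto
    then have h: "0 \<le> i" "0 \<le> j" "0 \<le> k" "mcoeff p (nat i) (nat j) (nat k) \<noteq> 0"
      by (auto simp: cf_def split: if_splits)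
    have e: "x = (\<lambda>(i,j,k). (int i, int j, int k)) (nat i, nat j, nat k)" using x h by simp
    have m: "(nat i, nat j, nat k) \<in> {(i,j,k). mcoeff p i j k \<noteq> 0}" using h by simp
    show "x \<in> (\<lambda>(i,j,k). (int i, int j, int k)) ` {(i,j,k). mcoeff p i j k \<noteq> 0}"
      using e m by (rule image_eqI)
  qed
  show "finite ((\<lambda>(i,j,k). (int i, int j, int k)) ` {(i,j,k). mcoeff p i j k \<noteq> 0})"
    using finite_mcoeff by blast
qed

lemma cf_nn: "cf p i j k \<noteq> 0 \<Longrightarrow> 0 \<le> i \<and> 0 \<le> j \<and> 0 \<le> k"
  by (auto simp: cf_def split: if_splits)

lemma pick_max2:
  fixes G :: "int \<Rightarrow> int \<Rightarrow> complex" and w :: "int \<Rightarrow> int \<Rightarrow> int"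
  assumes fin: "finite {(j,k). G j k \<noteq> 0}" and nz: "G j0 k0 \<noteq> 0"
  shows "\<exists>j1 k1. G j1 k1 \<noteq> 0 \<and> (\<forall>j k. w j1 k1 < w j k \<longrightarrow> G j k = 0)"
proof -
  have ne: "{(j,k). G j k \<noteq> 0} \<noteq> {}" using nz by auto
  obtain p where pS: "p \<in> {(j,k). G j k \<noteq> 0}" and pm: "\<forall>q\<in>{(j,k). G j k \<noteq> 0}. (\<lambda>(j,k). w j k) q \<le> (\<lambda>(j,k). w j k) p"
    using ex_max_w[OF fin ne, of "\<lambda>(j,k). w j k"] by blast
  obtain j1 k1 where p: "p = (j1, k1)" by (cases p)
  have "G j1 k1 \<noteq> 0" using pS p by simp
  moreover have "\<forall>j k. w j1 k1 < w j k \<longrightarrow> G j k = 0"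
  proof (intro allI impI)
    fix j k assume "w j1 k1 < w j k"
    then show "G j k = 0" using pm p by force
  qed
  ultimately show ?thesis by blast
qed

lemma pick_max3:
  fixes F :: "int \<Rightarrow> int \<Rightarrow> int \<Rightarrow> complex" and w :: "int \<Rightarrow> int \<Rightarrow> int \<Rightarrow> int"
  assumes fin: "finite {(i,j,k). F i j k \<noteq> 0}" and nz: "F i0 j0 k0 \<noteq> 0"
  shows "\<exists>i1 j1 k1. F i1 j1 k1 \<noteq> 0 \<and> (\<forall>i j k. w i1 j1 k1 < w i j k \<longrightarrow> F i j k = 0)"
proof -
  have ne: "{(i,j,k). F i j k \<noteq> 0} \<noteq> {}" using nz by auto
  obtain p where pS: "p \<in> {(i,j,k). F i j k \<noteq> 0}"
    and pm: "\<forall>q\<in>{(i,j,k). F i j k \<noteq> 0}. (\<lambda>(i,j,k). w i j k) q \<le> (\<lambda>(i,j,k). w i j k) p"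
    using ex_max_w[OF fin ne, of "\<lambda>(i,j,k). w i j k"] by blast
  obtain i1 j1 k1 where p: "p = (i1, j1, k1)" by (cases p)
  have "F i1 j1 k1 \<noteq> 0" using pS p by simp
  moreover have "\<forall>i j k. w i1 j1 k1 < w i j k \<longrightarrow> F i j k = 0"
  proof (intro allI impI)
    fix i j k assume "w i1 j1 k1 < w i j k"
    then show "F i j k = 0" using pm p by force
  qed
  ultimately show ?thesis by blast
qed

lemma slice_i:
  fixes F :: "int \<Rightarrow> int \<Rightarrow> int \<Rightarrow> complex"
  assumes "finite {(i,j,k). F i j k \<noteq> 0}"
  shows "finite {(j,k). F i0 j k \<noteq> 0}"
proof (rule finite_subset)
  show "{(j,k). F i0 j k \<noteq> 0} \<subseteq> (\<lambda>(i,j,k). (j,k)) ` {(i,j,k). F i j k \<noteq> 0}"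
    by (auto simp: image_iff)
  show "finite ((\<lambda>(i,j,k). (j,k)) ` {(i,j,k). F i j k \<noteq> 0})" using assms by blast
qed

lemma slice_k:
  fixes F :: "int \<Rightarrow> int \<Rightarrow> int \<Rightarrow> complex"
  assumes "finite {(i,j,k). F i j k \<noteq> 0}"
  shows "finite {(i,j). F i j k0 \<noteq> 0}"
proof (rule finite_subset)
  show "{(i,j). F i j k0 \<noteq> 0} \<subseteq> (\<lambda>(i,j,k). (i,j)) ` {(i,j,k). F i j k \<noteq> 0}"
    by (auto simp: image_iff)
  show "finite ((\<lambda>(i,j,k). (i,j)) ` {(i,j,k). F i j k \<noteq> 0})" using assms by blast
qed

lemma core:
  fixes F :: "int \<Rightarrow> int \<Rightarrow> int \<Rightarrow> complex"
    and A B Cc k000 k100 k010 k001 k200 k020 k002 k110 k101 k011 :: complex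
  assumes fin: "finite {(i,j,k). F i j k \<noteq> 0}"
    and nn: "\<And>i j k. F i j k \<noteq> 0 \<Longrightarrow> 0 \<le> i \<and> 0 \<le> j \<and> 0 \<le> k"
    and eq: "\<And>i j k. (of_int i - of_int j - B * of_int k) * F i j k + (Cc * (of_int i - 1) + of_int j) * F (i - 1) j k
        - of_int i * F i (j - 1) k - A * (of_int i - 1) * F (i - 1) j (k - 1) + A * of_int k * F (i - 2) j k
      = k000 * F i j k + k100 * F (i - 1) j k + k010 * F i (j - 1) k + k001 * F i j (k - 1)
        + k200 * F (i - 2) j k + k020 * F i (j - 2) k + k002 * F i j (k - 2)
        + k110 * F (i - 1) (j - 1) k + k101 * F (i - 1) j (k - 1) + k011 * F i (j - 1) (k - 1)"
    and hx: "F 0 jx kx \<noteq> 0" and hy: "F iy 0 ky \<noteq> 0" and hz: "F iz jz 0 \<noteq> 0"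
  shows "k000 = 0 \<and> k100 = 0 \<and> k010 = 0 \<and> k001 = 0 \<and> k200 = 0 \<and> k020 = 0 \<and> k002 = 0
    \<and> k110 = 0 \<and> k101 = 0 \<and> k011 = 0"
proof -
  have negi: "F i j k = 0" if "i < 0" for i j k using nn[of i j k] that by fastforce
  have negj: "F i j k = 0" if "j < 0" for i j k using nn[of i j k] that by fastforce
  have negk: "F i j k = 0" if "k < 0" for i j k using nn[of i j k] that by fastforce
  have finA0: "finite {(j,k). F 0 j k \<noteq> 0}" using slice_i[OF fin] .
  obtain j1 k1 where p1: "F 0 j1 k1 \<noteq> 0" and m1: "\<And>j k. 2*j1 + k1 < 2*j + k \<Longrightarrow> F 0 j k = 0"
    using pick_max2[OF finA0 hx, of "\<lambda>j k. 2*j + k"] by blast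
  obtain j2 k2 where p2: "F 0 j2 k2 \<noteq> 0" and m2: "\<And>j k. j2 + 2*k2 < j + 2*k \<Longrightarrow> F 0 j k = 0"
    using pick_max2[OF finA0 hx, of "\<lambda>j k. j + 2*k"] by blast
  have "k020 * F 0 j1 k1 = 0" using eq[of 0 "j1+2" k1] by (simp add: m1 negi)
  then have z020: "k020 = 0" using p1 by simp
  have "k002 * F 0 j2 k2 = 0" using eq[of 0 j2 "k2+2"] by (simp add: m2 negi)
  then have z002: "k002 = 0" using p2 by simp
  have "k011 * F 0 j1 k1 = 0" using eq[of 0 "j1+1" "k1+1"] by (simp add: m1 negi z020 z002)
  then have z011: "k011 = 0" using p1 by simp
  have "k010 * F 0 j1 k1 = 0" using eq[of 0 "j1+1" k1] by (simp add: m1 negi z020 z002 z011)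
  then have z010: "k010 = 0" using p1 by simp
  have "k001 * F 0 j2 k2 = 0" using eq[of 0 j2 "k2+1"] by (simp add: m2 negi z010 z020 z002 z011)
  then have z001: "k001 = 0" using p2 by simp
  have finZ0: "finite {(i,j). F i j 0 \<noteq> 0}" using slice_k[OF fin] .
  obtain i3 j3 where p3: "F i3 j3 0 \<noteq> 0" and m3: "\<And>i j. 2*i3 + j3 < 2*i + j \<Longrightarrow> F i j 0 = 0"
    using pick_max2[OF finZ0 hz, of "\<lambda>i j. 2*i + j"] by blast
  have "k200 * F i3 j3 0 = 0" using eq[of "i3+2" j3 0] by (simp add: m3 negk z010 z001 z020 z002 z011)
  then have z200: "k200 = 0" using p3 by simp
  have "k110 * F i3 j3 0 = 0" using eq[of "i3+1" "j3+1" 0] by (simp add: m3 negk z010 z001 z020 z002 z011 z200)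
  then have z110: "k110 = 0" using p3 by simp
  have eq0: "(of_int i - of_int j - k000) * F i j 0 + (Cc * (of_int i - 1) + of_int j - k100) * F (i - 1) j 0
      - of_int i * F i (j - 1) 0 = 0" for i j
    using eq[of i j 0] by (simp add: negk z010 z001 z020 z002 z011 z200 z110 algebra_simps)
  have lv0: "i = 0" if "F i j 0 \<noteq> 0" for i j
    using LV[of "\<lambda>i j. F i j 0", OF finZ0 _ eq0 that] nn by blast
  have allI0: "i = 0" if nzF: "F i j k \<noteq> 0" for i j k
  proof (cases "A = 0")
    case False
    obtain i4 j4 k4 where p4: "F i4 j4 k4 \<noteq> 0" and m4: "\<And>i j k. i4 < i \<Longrightarrow> F i j k = 0"
      using pick_max3[OF fin nzF, of "\<lambda>i j k. i"] by blast
    have "A * of_int k4 * F i4 j4 k4 = 0"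
      using eq[of "i4+2" j4 k4] by (simp add: m4 z010 z001 z020 z002 z011 z200 z110)
    then have "k4 = 0" using p4 False by simp
    then have "i4 = 0" using lv0 p4 by blast
    moreover have "i \<le> i4" using m4 nzF by force
    moreover have "0 \<le> i" using nn nzF by blast
    ultimately show ?thesis by simp
  next
    case True
    obtain i5 j5 k5 where p5: "F i5 j5 k5 \<noteq> 0" and m5: "\<And>i j k. k5 < k \<Longrightarrow> F i j k = 0"
      using pick_max3[OF fin nzF, of "\<lambda>i j k. k"] by blast
    have "k101 * F i5 j5 k5 = 0"
      using eq[of "i5+1" j5 "k5+1"] by (simp add: m5 True z010 z001 z020 z002 z011 z200 z110)
    then have z101: "k101 = 0" using p5 by simp
    have eqk: "(of_int i - of_int j - (k000 + B * of_int k)) * F i j k + (Cc * (of_int i - 1) + of_int j - k100) * F (i - 1) j k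
      - of_int i * F i (j - 1) k = 0" for i j
      using eq[of i j k] by (simp add: True z010 z001 z020 z002 z011 z200 z110 z101 algebra_simps)
    show ?thesis
      using LV[of "\<lambda>i j. F i j k", OF slice_k[OF fin] _ eqk nzF] nn by blast
  qed
  have pos: "F i j k = 0" if "0 < i" for i j k using allI0[of i j k] that by force
  obtain i6 j6 k6 where p6: "F i6 j6 k6 \<noteq> 0" and m6: "\<And>i j k. k6 < k \<Longrightarrow> F i j k = 0"
    using pick_max3[OF fin hx, of "\<lambda>i j k. k"] by blast
  have i6: "i6 = 0" using allI0 p6 by blast
  have "k101 * F 0 j6 k6 = 0"
    using eq[of 1 j6 "k6+1"] by (simp add: m6 pos negi z010 z001 z020 z002 z011 z200 z110)
  then have z101: "k101 = 0" using p6 i6 by simp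
  have eq1: "(of_int j - k100) * F 0 j k = 0" for j k
    using eq[of 1 j k] by (simp add: pos negi z010 z001 z020 z002 z011 z200 z110 z101 algebra_simps)
  have iy: "iy = 0" using allI0 hy by blast
  have "(of_int 0 - k100) * F 0 0 ky = 0" using eq1[of 0 ky] .
  then have z100: "k100 = 0" using hy iy by simp
  have iz: "iz = 0" using allI0 hz by blast
  have "(of_int jz - k100) * F 0 jz 0 = 0" using eq1[of jz 0] .
  then have "jz = 0" using hz iz z100 by simp
  then have hz0: "F 0 0 0 \<noteq> 0" using hz iz by simp
  have "k000 * F 0 0 0 = 0"
    using eq[of 0 0 0] by (simp add: negi negj negk)
  then have z000: "k000 = 0" using hz0 by simp
  show ?thesis using z000 z100 z010 z001 z200 z020 z002 z110 z101 z011 by simp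
qed

lemma K_zero:
  fixes a b c :: real
  assumes D: "vf a b c f = K * f" and T: "total_degree_le K 2"
    and hx: "cf f 0 jx kx \<noteq> 0" and hy: "cf f iy 0 ky \<noteq> 0" and hz: "cf f iz jz 0 \<noteq> 0"
  shows "K = 0"
proof -
  have eq: "(of_int i - of_int j - complex_of_real b * of_int k) * cf f i j k
        + (complex_of_real c * (of_int i - 1) + of_int j) * cf f (i - 1) j k
        - of_int i * cf f i (j - 1) k - complex_of_real a * (of_int i - 1) * cf f (i - 1) j (k - 1)
        + complex_of_real a * of_int k * cf f (i - 2) j k
      = cf K 0 0 0 * cf f i j k + cf K 1 0 0 * cf f (i - 1) j k + cf K 0 1 0 * cf f i (j - 1) k
        + cf K 0 0 1 * cf f i j (k - 1) + cf K 2 0 0 * cf f (i - 2) j k + cf K 0 2 0 * cf f i (j - 2) k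
        + cf K 0 0 2 * cf f i j (k - 2) + cf K 1 1 0 * cf f (i - 1) (j - 1) k
        + cf K 1 0 1 * cf f (i - 1) j (k - 1) + cf K 0 1 1 * cf f i (j - 1) (k - 1)" for i j k
  proof -
    have "cf (vf a b c f) i j k = cf (K * f) i j k" using D by simp
    then show ?thesis by (simp only: cf_vf cf_Kf[OF T])
  qed
  have z: "cf K 0 0 0 = 0 \<and> cf K 1 0 0 = 0 \<and> cf K 0 1 0 = 0 \<and> cf K 0 0 1 = 0 \<and> cf K 2 0 0 = 0
     \<and> cf K 0 2 0 = 0 \<and> cf K 0 0 2 = 0 \<and> cf K 1 1 0 = 0 \<and> cf K 1 0 1 = 0 \<and> cf K 0 1 1 = 0"
    using core[of "cf f", OF finite_cf[of f] cf_nn[of f] eq hx hy hz] by blast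
  have "K = Kexp K" using Kexp_eq[OF T] .
  also have "\<dots> = 0" unfolding Kexp_def using z by (simp add: Cst_def)
  finally show ?thesis .
qed

lemma cf_Xfac: assumes "\<And>j k. cf f 0 j k = 0" shows "f = Xv * map_poly (map_poly (poly_shift 1)) f"
proof (rule cf_ext)
  fix i j k
  show "cf f i j k = cf (Xv * map_poly (map_poly (poly_shift 1)) f) i j k"
  proof (cases "1 \<le> i")
    case True
    then show ?thesis
      by (simp only: cf_X cf_Y cf_Z) (auto simp: cf_def mcoeff_def coeff_map_poly coeff_poly_shift nat_diff_distrib)
  next
    case False
    then have "i \<le> 0" by simp
    then show ?thesis using assms[of j k] by (simp only: cf_X) (cases "i = 0", auto simp: cf_def)
  qed
qed

lemma cf_Yfac: assumes "\<And>i k. cf f i 0 k = 0" shows "f = Yv * map_poly (poly_shift 1) f"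
proof (rule cf_ext)
  fix i j k
  show "cf f i j k = cf (Yv * map_poly (poly_shift 1) f) i j k"
  proof (cases "1 \<le> j")
    case True
    then show ?thesis
      by (simp only: cf_X cf_Y cf_Z) (auto simp: cf_def mcoeff_def coeff_map_poly coeff_poly_shift nat_diff_distrib)
  next
    case False
    then have "j \<le> 0" by simp
    then show ?thesis using assms[of i k] by (simp only: cf_Y) (cases "j = 0", auto simp: cf_def)
  qed
qed

lemma cf_Zfac: assumes "\<And>i j. cf f i j 0 = 0" shows "f = Zv * poly_shift 1 f"
proof (rule cf_ext)
  fix i j k
  show "cf f i j k = cf (Zv * poly_shift 1 f) i j k"
  proof (cases "1 \<le> k")
    case True
    then show ?thesis
      by (simp only: cf_Z) (auto simp: cf_def mcoeff_def coeff_poly_shift nat_diff_distrib)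
  next
    case False
    then have "k \<le> 0" by simp
    then show ?thesis using assms[of i j] by (simp only: cf_Z) (cases "k = 0", auto simp: cf_def)
  qed
qed

lemma unit3: assumes "(g::cpoly3) dvd 1" shows "\<exists>\<kappa>. \<kappa> \<noteq> 0 \<and> g = Cst \<kappa>"
proof -
  obtain g1 where g1: "g = [:g1:]" "g1 dvd 1" using assms is_unit_poly_iff by blast
  obtain g2 where g2: "g1 = [:g2:]" "g2 dvd 1" using g1(2) is_unit_poly_iff by blast
  obtain g3 where g3: "g2 = [:g3:]" "g3 dvd 1" using g2(2) is_unit_poly_iff by blast
  have "g3 \<noteq> 0" using g3(2) by auto
  then show ?thesis using g1 g2 g3 by (auto simp: Cst_def)
qed

lemma lin_factor:
  fixes p q :: "'a::idom poly"
  assumes e: "p * q = [:0, 1:]"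
  shows "p dvd 1 \<or> q dvd 1"
proof -
  have nz: "p \<noteq> 0" "q \<noteq> 0" using e by auto
  have "degree p + degree q = 1" using degree_mult_eq[OF nz] e by simp
  then have "degree p = 0 \<or> degree q = 0" by arith
  then show ?thesis
  proof
    assume "degree p = 0"
    then obtain c where pc: "p = [:c:]" by (metis degree_eq_zeroE)
    have "coeff (p * q) 1 = 1" using e by simp
    then have "c * coeff q 1 = 1" using pc by simp
    then have "c dvd 1" by (metis dvdI)
    then show ?thesis using pc by (simp add: is_unit_const_poly_iff)
  next
    assume "degree q = 0"
    then obtain c where qc: "q = [:c:]" by (metis degree_eq_zeroE)
    have "coeff (p * q) 1 = 1" using e by simp
    then have "c * coeff p 1 = 1" using qc by (simp add: mult.commute)
    then have "c dvd 1" by (metis dvdI)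
    then show ?thesis using qc by (simp add: is_unit_const_poly_iff)
  qed
qed

lemma const_factor:
  fixes p q :: "'a::idom poly"
  assumes e: "p * q = [:c:]" and c: "c \<noteq> 0"
  shows "p = [:coeff p 0:] \<and> q = [:coeff q 0:]"
proof -
  have nz: "p \<noteq> 0" "q \<noteq> 0" using e c by auto
  have "degree p + degree q = 0" using degree_mult_eq[OF nz] e by simp
  then have "degree p = 0" "degree q = 0" by auto
  then show ?thesis by (metis degree_eq_zeroE coeff_pCons_0)
qed

lemma X1_not_unit: "\<not> ([:0, 1:] :: 'a::idom poly) dvd 1"
proof
  assume "([:0, 1:] :: 'a poly) dvd 1"
  then obtain c where "([:0, 1:] :: 'a poly) = [:c:]" using is_unit_poly_iff by blast
  then show False by simp
qed

lemma irr_Zv: "irreducible Zv"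
  unfolding Zv_def
proof (rule irreducibleI)
  show "([:0, 1:] :: cpoly3) \<noteq> 0" by simp
  show "\<not> ([:0, 1:] :: cpoly3) dvd 1" by (rule X1_not_unit)
  fix p q :: cpoly3 assume "[:0, 1:] = p * q"
  then show "p dvd 1 \<or> q dvd 1" using lin_factor by metis
qed

lemma irr_Yv: "irreducible Yv"
  unfolding Yv_def
proof (rule irreducibleI)
  show "([:[:0, 1:]:] :: cpoly3) \<noteq> 0" by simp
  show "\<not> ([:[:0, 1:]:] :: cpoly3) dvd 1" using X1_not_unit by (simp add: is_unit_const_poly_iff)
  fix p q :: cpoly3 assume e: "[:[:0, 1:]:] = p * q"
  then have cp: "p = [:coeff p 0:]" "q = [:coeff q 0:]" using const_factor[of p q "[:0,1:]"] by auto
  obtain p0 q0 where p0: "p = [:p0:]" and q0: "q = [:q0:]" using cp by blast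
  have "[:p0 * q0:] = [:[:0, 1:]:]" using e p0 q0 by simp
  then have "p0 * q0 = [:0, 1:]" by simp
  then have "p0 dvd 1 \<or> q0 dvd 1" by (rule lin_factor)
  then show "p dvd 1 \<or> q dvd 1" using p0 q0 by (simp add: is_unit_const_poly_iff)
qed

lemma irr_Xv: "irreducible Xv"
  unfolding Xv_def
proof (rule irreducibleI)
  show "([:[:[:0, 1:]:]:] :: cpoly3) \<noteq> 0" by simp
  show "\<not> ([:[:[:0, 1:]:]:] :: cpoly3) dvd 1" using X1_not_unit by (simp add: is_unit_const_poly_iff)
  fix p q :: cpoly3 assume e: "[:[:[:0, 1:]:]:] = p * q"
  then have cp: "p = [:coeff p 0:]" "q = [:coeff q 0:]" using const_factor[of p q "[:[:0,1:]:]"] by auto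
  obtain p0 q0 where p0: "p = [:p0:]" and q0: "q = [:q0:]" using cp by blast
  have "[:p0 * q0:] = [:[:[:0, 1:]:]:]" using e p0 q0 by simp
  then have e1: "p0 * q0 = [:[:0, 1:]:]" by simp
  then have cp1: "p0 = [:coeff p0 0:]" "q0 = [:coeff q0 0:]" using const_factor[of p0 q0 "[:0,1:]"] by auto
  obtain p1 q1 where p1: "p0 = [:p1:]" and q1: "q0 = [:q1:]" using cp1 by blast
  have "[:p1 * q1:] = [:[:0, 1:]:]" using e1 p1 q1 by (simp add: mult.commute)
  then have "p1 * q1 = [:0, 1:]" by simp
  then have "p1 dvd 1 \<or> q1 dvd 1" by (rule lin_factor)
  then show "p dvd 1 \<or> q dvd 1" using p0 q0 p1 q1 by (simp add: is_unit_const_poly_iff)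
qed

lemma tdl_from_cf: assumes "\<And>i j k. cf K i j k \<noteq> 0 \<Longrightarrow> i + j + k \<le> 2" shows "total_degree_le K 2"
  unfolding total_degree_le_def
proof (intro allI impI)
  fix i j k assume "mcoeff K i j k \<noteq> 0"
  then have "cf K (int i) (int j) (int k) \<noteq> 0" by (simp add: cf_def)
  then have "int i + int j + int k \<le> 2" by (rule assms)
  then show "i + j + k \<le> 2" by linarith
qed

lemma plus1_eq0 [simp]: "((j::int) + 1 = 0) = (j = -1)" by arith

lemma dX_Xv: "dX Xv = 1" by (rule cf_ext) (simp add: cf_Xv cf_one)
lemma dY_Xv: "dY Xv = 0" by (rule cf_ext) (simp add: cf_Xv cf_one)
lemma dZ_Xv: "dZ Xv = 0" by (rule cf_ext) (simp add: cf_Xv cf_one)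
lemma dX_Yv: "dX Yv = 0" by (rule cf_ext) (simp add: cf_Yv cf_one)
lemma dY_Yv: "dY Yv = 1" by (rule cf_ext) (simp add: cf_Yv cf_one)
lemma dZ_Yv: "dZ Yv = 0" by (rule cf_ext) (simp add: cf_Yv cf_one)
lemma dX_Zv: "dX Zv = 0" by (rule cf_ext) (simp add: cf_Zv cf_one)
lemma dY_Zv: "dY Zv = 0" by (rule cf_ext) (simp add: cf_Zv cf_one)
lemma dZ_Zv: "dZ Zv = 1" by (rule cf_ext) (simp add: cf_Zv cf_one)

lemma darboux_Xv: "darboux a b c Xv (1 - Yv + Cst (complex_of_real c) * Xv - Cst (complex_of_real a) * (Xv * Zv))
   \<and> (1 - Yv + Cst (complex_of_real c) * Xv - Cst (complex_of_real a) * (Xv * Zv)) \<noteq> 0"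
proof (intro conjI)
  let ?K = "1 - Yv + Cst (complex_of_real c) * Xv - Cst (complex_of_real a) * (Xv * Zv)"
  have cK: "cf ?K i j k = cf 1 i j k - cf 1 i (j - 1) k + complex_of_real c * cf 1 (i - 1) j k
      - complex_of_real a * cf 1 (i - 1) j (k - 1)" for i j k
    by (simp add: cf_Xv cf_Yv cf_Zv)
  have "total_degree_le ?K 2"
  proof (rule tdl_from_cf)
    fix i j k assume "cf ?K i j k \<noteq> 0"
    then show "i + j + k \<le> 2" unfolding cK cf_one by (auto split: if_splits)
  qed
  moreover have "vf a b c Xv = ?K * Xv"
    unfolding vf_def dX_Xv dY_Xv dZ_Xv by (simp add: algebra_simps)
  ultimately show "darboux a b c Xv ?K" by (simp add: darboux_def)
  have "cf ?K 0 0 0 = 1" unfolding cK cf_one by simp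
  then show "?K \<noteq> 0" by (metis cf_zero one_neq_zero)
qed

lemma darboux_Yv: "darboux a b c Yv (-1 + Xv) \<and> (-1 + Xv :: cpoly3) \<noteq> 0"
proof (intro conjI)
  have cK: "cf (-1 + Xv) i j k = - cf 1 i j k + cf 1 (i - 1) j k" for i j k
    by (simp add: cf_Xv)
  have "total_degree_le (-1 + Xv) 2"
  proof (rule tdl_from_cf)
    fix i j k assume "cf (-1 + Xv) i j k \<noteq> 0"
    then show "i + j + k \<le> 2" unfolding cK cf_one by (auto split: if_splits)
  qed
  moreover have "vf a b c Yv = (-1 + Xv) * Yv"
    unfolding vf_def dX_Yv dY_Yv dZ_Yv by (simp add: algebra_simps)
  ultimately show "darboux a b c Yv (-1 + Xv)" by (simp add: darboux_def)
  have "cf (-1 + Xv) 0 0 0 = -1" unfolding cK cf_one by simp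
  then show "(-1 + Xv :: cpoly3) \<noteq> 0" by (metis cf_zero neg_0_equal_iff_equal one_neq_zero)
qed

lemma darboux_Zv: "darboux a b c Zv (- Cst (complex_of_real b) + Cst (complex_of_real a) * (Xv * Xv))
  \<and> ((- Cst (complex_of_real b) + Cst (complex_of_real a) * (Xv * Xv)) \<noteq> 0 \<or> (a = 0 \<and> b = 0))"
proof (intro conjI)
  let ?K = "- Cst (complex_of_real b) + Cst (complex_of_real a) * (Xv * Xv)"
  have cK: "cf ?K i j k = - complex_of_real b * cf 1 i j k + complex_of_real a * cf 1 (i - 2) j k" for i j k
    by (simp add: cf_Xv cf_Cst1 diff_diff_eq)
  have "total_degree_le ?K 2"
  proof (rule tdl_from_cf)
    fix i j k assume "cf ?K i j k \<noteq> 0"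
    then show "i + j + k \<le> 2" unfolding cK cf_one by (auto split: if_splits)
  qed
  moreover have "vf a b c Zv = ?K * Zv"
    unfolding vf_def dX_Zv dY_Zv dZ_Zv by (simp add: algebra_simps power2_eq_square)
  ultimately show "darboux a b c Zv ?K" by (simp add: darboux_def)
  show "?K \<noteq> 0 \<or> (a = 0 \<and> b = 0)"
  proof (cases "?K = 0")
    case True
    have h0: "cf ?K 0 0 0 = 0" using True by simp
    have h2: "cf ?K 2 0 0 = 0" using True by simp
    from h0 have "b = 0" unfolding cK cf_one by simp
    moreover from h2 have "a = 0" unfolding cK cf_one by simp
    ultimately show ?thesis by simp
  qed simp
qed

theorem theorem1p1:
  fixes a b c :: real
  assumes "a \<ge> 0" and "b \<ge> 0" and "c \<ge> 0"
  shows "(\<forall>f K. irreducible f \<and> darboux a b c f K \<and> K \<noteq> 0 \<longrightarrow>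
            (\<exists>\<kappa>. \<kappa> \<noteq> 0 \<and> (f = Cst \<kappa> * Xv \<or> f = Cst \<kappa> * Yv \<or> f = Cst \<kappa> * Zv)))
       \<and> irreducible Xv \<and> irreducible Yv \<and> irreducible Zv
       \<and> (\<exists>K. darboux a b c Xv K \<and> K \<noteq> 0)
       \<and> (\<exists>K. darboux a b c Yv K \<and> K \<noteq> 0)
       \<and> (\<exists>K. darboux a b c Zv K \<and> (K \<noteq> 0 \<or> (a = 0 \<and> b = 0)))"
proof (intro conjI)
  show "\<forall>f K. irreducible f \<and> darboux a b c f K \<and> K \<noteq> 0 \<longrightarrow>
            (\<exists>\<kappa>. \<kappa> \<noteq> 0 \<and> (f = Cst \<kappa> * Xv \<or> f = Cst \<kappa> * Yv \<or> f = Cst \<kappa> * Zv))"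
  proof (intro allI impI)
    fix f K assume h: "irreducible f \<and> darboux a b c f K \<and> K \<noteq> 0"
    then have irr: "irreducible f" and T: "total_degree_le K 2" and D: "vf a b c f = K * f"
      and K0: "K \<noteq> 0" by (auto simp: darboux_def)
    have unit_case: "\<exists>\<kappa>. \<kappa> \<noteq> 0 \<and> f = Cst \<kappa> * V"
      if fv: "f = V * g" and nu: "\<not> V dvd 1" for V g
    proof -
      have "V dvd 1 \<or> g dvd 1" using irreducibleD[OF irr fv] .
      then have "g dvd 1" using nu by blast
      then obtain \<kappa> where "\<kappa> \<noteq> 0" "g = Cst \<kappa>" using unit3 by blast
      then show ?thesis using fv by (auto simp: mult.commute)
    qed
    show "\<exists>\<kappa>. \<kappa> \<noteq> 0 \<and> (f = Cst \<kappa> * Xv \<or> f = Cst \<kappa> * Yv \<or> f = Cst \<kappa> * Zv)"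
    proof (cases "\<forall>j k. cf f 0 j k = 0")
      case True
      then have "f = Xv * map_poly (map_poly (poly_shift 1)) f" using cf_Xfac by blast
      then show ?thesis using unit_case irreducible_not_unit[OF irr_Xv] by blast
    next
      case hx: False
      show ?thesis
      proof (cases "\<forall>i k. cf f i 0 k = 0")
        case True
        then have "f = Yv * map_poly (poly_shift 1) f" using cf_Yfac by blast
        then show ?thesis using unit_case irreducible_not_unit[OF irr_Yv] by blast
      next
        case hy: False
        show ?thesis
        proof (cases "\<forall>i j. cf f i j 0 = 0")
          case True
          then have "f = Zv * poly_shift 1 f" using cf_Zfac by blast
          then show ?thesis using unit_case irreducible_not_unit[OF irr_Zv] by blast
        next
          case hz: False
          from hx obtain jx kx where "cf f 0 jx kx \<noteq> 0" by blast
          moreover from hy obtain iy ky where "cf f iy 0 ky \<noteq> 0" by blast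
          moreover from hz obtain iz jz where "cf f iz jz 0 \<noteq> 0" by blast
          ultimately have "K = 0" using K_zero[OF D T] by blast
          with K0 show ?thesis by blast
        qed
      qed
    qed
  qed
  show "irreducible Xv" by (rule irr_Xv)
  show "irreducible Yv" by (rule irr_Yv)
  show "irreducible Zv" by (rule irr_Zv)
  show "\<exists>K. darboux a b c Xv K \<and> K \<noteq> 0" using darboux_Xv by blast
  show "\<exists>K. darboux a b c Yv K \<and> K \<noteq> 0" using darboux_Yv by blast
  show "\<exists>K. darboux a b c Zv K \<and> (K \<noteq> 0 \<or> (a = 0 \<and> b = 0))" using darboux_Zv by blast
qed

end
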